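(* Let $(\omega,c)\in\mathbb{R}^2$ satisfy: $\omega>c^2/4$, or $\omega=c^2/4$ and $c>0$. Then the function $(\alpha_0,\alpha_1)\ni\eta_3\mapsto T_\psi(\eta_3)\in(0,\infty)$ is strictly increasing, where $$T_\psi(\eta_3)=\frac{8}{\sqrt{\eta_3\sqrt{A(\eta_3)}}}\,K(k(\eta_3)).$$
   Context: $\alpha_0=\tfrac13(4c+\sqrt{48\omega+4c^2})$, $\alpha_1=4\sqrt\omega+2c$, $A(x)=-3x^2+8cx+64\omega$ (positive on $(\alpha_0,\alpha_1)$). For $\eta_3\in(\alpha_0,\alpha_1)$: $\eta_1=\frac{-\eta_3+4c-\sqrt{A(\eta_3)}}{2}$, $\eta_2=\frac{-\eta_3+4c+\sqrt{A(\eta_3)}}{2}$ (so $\eta_3(\eta_2-\eta_1)=\eta_3\sqrt{A(\eta_3)}$), and $k(\eta_3)^2=\frac{-\eta_1(\eta_3-\eta_2)}{\eta_3(\eta_2-\eta_1)}\in(0,1)$. $K(k)=\int_0^{\pi/2}(1-k^2\sin^2\theta)^{-1/2}d\theta$ is the complete elliptic integral of the first kind. $T_\psi$ is the fundamental period of the periodic solution $\psi=\Phi^2$ with maximum $\eta_3$. *)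

theory Defs
  imports "HOL-Analysis.Analysis"
begin

definition alpha0 :: "real \<Rightarrow> real \<Rightarrow> real" where
  "alpha0 \<omega> c = (4 * c + sqrt (48 * \<omega> + 4 * c\<^sup>2)) / 3"

definition alpha1 :: "real \<Rightarrow> real \<Rightarrow> real" where
  "alpha1 \<omega> c = 4 * sqrt \<omega> + 2 * c"

definition Apoly :: "real \<Rightarrow> real \<Rightarrow> real \<Rightarrow> real" where
  "Apoly \<omega> c x = - 3 * x\<^sup>2 + 8 * c * x + 64 * \<omega>"

definition eta1 :: "real \<Rightarrow> real \<Rightarrow> real \<Rightarrow> real" where
  "eta1 \<omega> c \<eta>3 = (- \<eta>3 + 4 * c - sqrt (Apoly \<omega> c \<eta>3)) / 2"

definition eta2 :: "real \<Rightarrow> real \<Rightarrow> real \<Rightarrow> real" where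
  "eta2 \<omega> c \<eta>3 = (- \<eta>3 + 4 * c + sqrt (Apoly \<omega> c \<eta>3)) / 2"

definition ksq :: "real \<Rightarrow> real \<Rightarrow> real \<Rightarrow> real" where
  "ksq \<omega> c \<eta>3 = (- eta1 \<omega> c \<eta>3 * (\<eta>3 - eta2 \<omega> c \<eta>3))
                   / (\<eta>3 * (eta2 \<omega> c \<eta>3 - eta1 \<omega> c \<eta>3))"

definition ellipK :: "real \<Rightarrow> real" where
  "ellipK k = integral {0..pi/2} (\<lambda>\<theta>. 1 / sqrt (1 - k\<^sup>2 * (sin \<theta>)\<^sup>2))"

definition T_psi :: "real \<Rightarrow> real \<Rightarrow> real \<Rightarrow> real" where
  "T_psi \<omega> c \<eta>3 = 8 / sqrt (\<eta>3 * sqrt (Apoly \<omega> c \<eta>3)) * ellipK (sqrt (ksq \<omega> c \<eta>3))"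

end

theory Submission
  imports Defs
begin


lemma landen_point:
  fixes a b \<phi> t D :: real
  assumes a: "a>0" and b: "b>0" and D: "D = a\<^sup>2*(cos \<phi>)\<^sup>2 + b\<^sup>2*(sin \<phi>)\<^sup>2" and Dp: "D>0"
  and ct: "cos t = (a*(cos \<phi>)\<^sup>2 - b*(sin \<phi>)\<^sup>2)/sqrt D"
  and st: "sin t = (a+b) * sin \<phi> * cos \<phi>/sqrt D"
  shows "(1 + a*b/D) * (1/sqrt(((a+b)/2)\<^sup>2 * (cos t)\<^sup>2 + a*b*(sin t)\<^sup>2)) = 2/sqrt D"
proof -
  define c s where "c = cos \<phi>" and "s = sin \<phi>"
  have cs: "s\<^sup>2 + c\<^sup>2 = 1" unfolding c_def s_def by simp
  have h1: "D + a*b = (a+b)*(a*c\<^sup>2+b* s\<^sup>2)"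
  proof -
    have "D + a*b = a\<^sup>2*c\<^sup>2 + b\<^sup>2* s\<^sup>2 + a*b*(s\<^sup>2+c\<^sup>2)" using D cs unfolding c_def s_def by simp
    then show ?thesis by (simp add: algebra_simps power2_eq_square)
  qed
  have sD: "(sqrt D)\<^sup>2 = D" using Dp by simp
  have Q: "((a+b)/2)\<^sup>2 * (cos t)\<^sup>2 + a*b*(sin t)\<^sup>2 = (D+a*b)\<^sup>2/(4*D)"
  proof -
    have "((a+b)/2)\<^sup>2 * (cos t)\<^sup>2 + a*b*(sin t)\<^sup>2
        = ((a+b)\<^sup>2/4 * (a*c\<^sup>2 - b* s\<^sup>2)\<^sup>2 + a*b*((a+b)* s*c)\<^sup>2)/D"
      using Dp unfolding ct st c_def[symmetric] s_def[symmetric]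
      by (simp add: power_divide sD field_simps)
    also have "\<dots> = ((a+b)*(a*c\<^sup>2+b* s\<^sup>2))\<^sup>2/(4*D)"
      using Dp by (simp add: field_simps power2_eq_square)
    finally show ?thesis using h1 by simp
  qed
  have pos: "D + a*b > 0" using Dp a b by (simp add: add_pos_pos)
  have E: "sqrt (((a+b)/2)\<^sup>2 * (cos t)\<^sup>2 + a*b*(sin t)\<^sup>2) = (D+a*b)/(2* sqrt D)"
    unfolding Q by (rule real_sqrt_unique) (use Dp pos in \<open>auto simp: power_divide sD field_simps\<close>)
  then have "(1 + a*b/D) * (1/sqrt(((a+b)/2)\<^sup>2 * (cos t)\<^sup>2 + a*b*(sin t)\<^sup>2))
     = ((D + a*b)/D) * (2* sqrt D/(D+a*b))" unfolding E using Dp by (simp add: field_simps)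
  also have "\<dots> = 2 * sqrt D / D" using Dp pos by (simp add: divide_simps)
  also have "\<dots> = 2 / sqrt D" using Dp by (simp add: divide_simps)
  finally show ?thesis .
qed

lemma arctan_tan_cs:
  fixes a b x :: real
  assumes a: "a>0" and b: "b>0" and cx: "cos x > 0"
  shows "cos (arctan (b/a * tan x)) = a * cos x / sqrt (a\<^sup>2*(cos x)\<^sup>2 + b\<^sup>2*(sin x)\<^sup>2)"
    and "sin (arctan (b/a * tan x)) = b * sin x / sqrt (a\<^sup>2*(cos x)\<^sup>2 + b\<^sup>2*(sin x)\<^sup>2)"
proof -
  define D where "D = a\<^sup>2*(cos x)\<^sup>2 + b\<^sup>2*(sin x)\<^sup>2"
  have Dp: "D > 0" unfolding D_def using a cx by (simp add: add_pos_nonneg)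
  have E: "sqrt (1 + (b/a * tan x)\<^sup>2) = sqrt D / (a * cos x)"
  proof (rule real_sqrt_unique)
    show "(sqrt D / (a * cos x))\<^sup>2 = 1 + (b / a * tan x)\<^sup>2"
      using Dp a cx by (simp add: power_divide D_def tan_def field_simps)
    show "0 \<le> sqrt D / (a * cos x)" using Dp a cx by simp
  qed
  then show "cos (arctan (b/a * tan x)) = a * cos x / sqrt D"
        and "sin (arctan (b/a * tan x)) = b * sin x / sqrt D"
    unfolding cos_arctan sin_arctan E using a cx Dp by (simp_all add: tan_def field_simps)
qed

lemma arctan_cot_cs:
  fixes a b x :: real
  assumes a: "a>0" and b: "b>0" and sx: "sin x > 0"
  shows "cos (arctan (a/b * (cos x / sin x))) = b * sin x / sqrt (a\<^sup>2*(cos x)\<^sup>2 + b\<^sup>2*(sin x)\<^sup>2)"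
    and "sin (arctan (a/b * (cos x / sin x))) = a * cos x / sqrt (a\<^sup>2*(cos x)\<^sup>2 + b\<^sup>2*(sin x)\<^sup>2)"
proof -
  define D where "D = a\<^sup>2*(cos x)\<^sup>2 + b\<^sup>2*(sin x)\<^sup>2"
  have Dp: "D > 0" unfolding D_def using b sx by (simp add: add_nonneg_pos)
  have E: "sqrt (1 + (a/b * (cos x / sin x))\<^sup>2) = sqrt D / (b * sin x)"
  proof (rule real_sqrt_unique)
    show "(sqrt D / (b * sin x))\<^sup>2 = 1 + (a / b * (cos x / sin x))\<^sup>2"
      using Dp b sx by (simp add: power_divide D_def field_simps)
    show "0 \<le> sqrt D / (b * sin x)" using Dp b sx by simp
  qed
  then show "cos (arctan (a/b * (cos x / sin x))) = b * sin x / sqrt D"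
        and "sin (arctan (a/b * (cos x / sin x))) = a * cos x / sqrt D"
    unfolding cos_arctan sin_arctan E using b sx Dp by (simp_all add: field_simps)
qed

lemma g1_deriv:
  fixes a b x :: real
  assumes a: "a>0" and b: "b>0" and cx: "cos x > 0"
  shows "((\<lambda>x. x + arctan (b/a * tan x)) has_real_derivative
          (1 + a*b/(a\<^sup>2*(cos x)\<^sup>2 + b\<^sup>2*(sin x)\<^sup>2))) (at x)"
proof -
  have Dp: "a\<^sup>2*(cos x)\<^sup>2 + b\<^sup>2*(sin x)\<^sup>2 > 0" using a cx by (simp add: add_pos_nonneg)
  have d: "((\<lambda>x. x + arctan (b/a * tan x)) has_real_derivative
      (1 + inverse (1 + (b/a * tan x)\<^sup>2) * (b/a * inverse ((cos x)\<^sup>2)))) (at x)"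
    by (rule derivative_intros DERIV_cmult DERIV_tan | use cx in simp)+
  have e: "1 + inverse (1 + (b/a * tan x)\<^sup>2) * (b/a * inverse ((cos x)\<^sup>2))
     = 1 + a*b/(a\<^sup>2*(cos x)\<^sup>2 + b\<^sup>2*(sin x)\<^sup>2)"
  proof -
    have "1 + (b/a * tan x)\<^sup>2 = (a\<^sup>2*(cos x)\<^sup>2 + b\<^sup>2*(sin x)\<^sup>2) / (a * cos x)\<^sup>2"
      using a cx by (simp add: tan_def power_divide field_simps)
    then have h: "inverse (1 + (b/a * tan x)\<^sup>2) = (a * cos x)\<^sup>2 / (a\<^sup>2*(cos x)\<^sup>2 + b\<^sup>2*(sin x)\<^sup>2)"
      by simp
    show ?thesis unfolding h using a cx Dp by (simp add: field_simps power2_eq_square)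
  qed
  show ?thesis using d unfolding e .
qed
lemma g2_deriv:
  fixes a b x :: real
  assumes a: "a>0" and b: "b>0" and sx: "sin x > 0"
  shows "((\<lambda>x. x + pi/2 - arctan (a/b * (cos x / sin x))) has_real_derivative
          (1 + a*b/(a\<^sup>2*(cos x)\<^sup>2 + b\<^sup>2*(sin x)\<^sup>2))) (at x)"
proof -
  have Dp: "a\<^sup>2*(cos x)\<^sup>2 + b\<^sup>2*(sin x)\<^sup>2 > 0" using b sx by (simp add: add_nonneg_pos)
  have d: "((\<lambda>x. x + pi/2 - arctan (a/b * (cos x / sin x))) has_real_derivative
      ((1 + 0) - inverse (1 + (a/b * (cos x / sin x))\<^sup>2) * (a/b * ((- sin x * sin x - cos x * cos x)/(sin x * sin x))))) (at x)"
    by (rule derivative_intros DERIV_cmult DERIV_divide DERIV_sin DERIV_cos | use sx in simp)+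
  have "1 + (a/b * (cos x / sin x))\<^sup>2 = (a\<^sup>2*(cos x)\<^sup>2 + b\<^sup>2*(sin x)\<^sup>2) / (b * sin x)\<^sup>2"
    using b sx by (simp add: power_divide field_simps)
  then have h: "inverse (1 + (a/b * (cos x / sin x))\<^sup>2) = (b * sin x)\<^sup>2 / (a\<^sup>2*(cos x)\<^sup>2 + b\<^sup>2*(sin x)\<^sup>2)"
    by simp
  have e: "(1 + 0) - inverse (1 + (a/b * (cos x / sin x))\<^sup>2) * (a/b * ((- sin x * sin x - cos x * cos x)/(sin x * sin x)))
     = 1 + a*b/(a\<^sup>2*(cos x)\<^sup>2 + b\<^sup>2*(sin x)\<^sup>2)"
  proof -
    have cs: "- sin x * sin x - cos x * cos x = -1" by (simp add: algebra_simps)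
    show ?thesis unfolding h cs using b sx Dp by (simp add: field_simps power2_eq_square)
  qed
  show ?thesis using d unfolding e .
qed
lemma landen:
  fixes a b :: real
  assumes a: "a>0" and b: "b>0"
  shows "integral {0..pi/2} (\<lambda>t. 1/sqrt(a\<^sup>2 * (cos t)\<^sup>2 + b\<^sup>2 * (sin t)\<^sup>2))
       = integral {0..pi/2} (\<lambda>t. 1/sqrt(((a+b)/2)\<^sup>2 * (cos t)\<^sup>2 + a * b * (sin t)\<^sup>2))"
proof -
  define D where "D x = a\<^sup>2 * (cos x)\<^sup>2 + b\<^sup>2 * (sin x)\<^sup>2" for x
  define F where "F t = 1/sqrt(((a+b)/2)\<^sup>2 * (cos t)\<^sup>2 + a * b * (sin t)\<^sup>2)" for t
  have Fpos: "((a+b)/2)\<^sup>2 * (cos t)\<^sup>2 + a * b * (sin t)\<^sup>2 > 0" for t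
  proof -
    have "((a+b)/2)\<^sup>2 - a * b = ((a-b)/2)\<^sup>2" by (simp add: power2_eq_square field_simps)
    then have "((a+b)/2)\<^sup>2 \<ge> a * b" by (metis diff_ge_0_iff_ge zero_le_power2)
    then have "a * b * (cos t)\<^sup>2 \<le> ((a+b)/2)\<^sup>2 * (cos t)\<^sup>2" by (rule mult_right_mono) simp
    then have "((a+b)/2)\<^sup>2 * (cos t)\<^sup>2 + a * b * (sin t)\<^sup>2 \<ge> a * b * (cos t)\<^sup>2 + a * b * (sin t)\<^sup>2"
      by linarith
    moreover have "a * b * (cos t)\<^sup>2 + a * b * (sin t)\<^sup>2 = a * b" by (simp flip: distrib_left)
    ultimately show ?thesis using a b by (smt (verit) mult_pos_pos)
  qed
  have Dpos: "D x > 0" if "cos x > 0 \<or> sin x > 0" for x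
    using that a b unfolding D_def by (auto simp: add_pos_nonneg add_nonneg_pos)
  have Fcont: "continuous_on S F" for S
    unfolding F_def by (intro continuous_intros) (use Fpos in \<open>auto simp: less_imp_neq[symmetric]\<close>)
  define g1 where "g1 x = x + arctan (b/a * tan x)" for x
  define g2 where "g2 x = x + pi/2 - arctan (a/b * (cos x / sin x))" for x
  have ab_inv: "arctan (b/a) = pi/2 - arctan (a/b)"
    using arctan_inverse[of "a/b"] a b by simp
  have g1_0: "g1 0 = 0" unfolding g1_def by simp
  have g1_m: "g1 (pi/4) = pi/4 + arctan (b/a)" unfolding g1_def by (simp add: tan_45)
  have g2_m: "g2 (pi/4) = pi/4 + arctan (b/a)" unfolding g2_def ab_inv
    by (simp add: cos_45 sin_45)
  have g2_e: "g2 (pi/2) = pi" unfolding g2_def by simp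
  have at_pos: "arctan (b/a) > 0" using a b by simp
  have p1: "((\<lambda>x. (1 + a*b/D x) *\<^sub>R F (g1 x)) has_integral integral {g1 0..g1 (pi/4)} F) {0..pi/4}"
  proof (rule has_integral_substitution[where c=0 and d=pi])
    show "g1 0 \<le> g1 (pi/4)" unfolding g1_0 g1_m using at_pos by simp
    show "g1 ` {0..pi/4} \<subseteq> {0..pi}"
    proof
      fix y assume "y \<in> g1 ` {0..pi/4}"
      then obtain x where x: "x \<in> {0..pi/4}" "y = g1 x" by auto
      have "0 \<le> tan x" by (intro tan_pos_pi2_le) (use x pi_gt_zero in \<open>auto simp del: pi_gt_zero\<close>)
      then have "0 \<le> arctan (b/a * tan x)" using a b by simp
      moreover have "arctan (b/a * tan x) < pi/2" by (rule arctan_ubound)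
      ultimately show "y \<in> {0..pi}" using x unfolding g1_def by auto
    qed
    show "continuous_on {0..pi} F" by (rule Fcont)
    fix x assume x: "x \<in> {0..pi/4}"
    have "cos x > 0" by (intro cos_gt_zero_pi) (use x pi_gt_zero in \<open>auto simp del: pi_gt_zero\<close>)
    then show "(g1 has_real_derivative (1 + a*b/D x)) (at x within {0..pi/4})"
      unfolding g1_def[abs_def] D_def using g1_deriv[OF a b] has_field_derivative_at_within by blast
  qed (simp)
  have p1': "((\<lambda>x. 2/sqrt (D x)) has_integral integral {0..pi/4 + arctan (b/a)} F) {0..pi/4}"
  proof -
    have "(1 + a*b/D x) *\<^sub>R F (g1 x) = 2/sqrt (D x)" if x: "x \<in> {0..pi/4}" for x
    proof -
      have cx: "cos x > 0" by (intro cos_gt_zero_pi) (use x pi_gt_zero in \<open>auto simp del: pi_gt_zero\<close>)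
      note cs = arctan_tan_cs[OF a b cx]
      show ?thesis unfolding F_def real_scaleR_def
      proof (rule landen_point[OF a b D_def Dpos])
        show "cos x > 0 \<or> sin x > 0" using cx by simp
        show "cos (g1 x) = (a * (cos x)\<^sup>2 - b * (sin x)\<^sup>2) / sqrt (D x)"
          unfolding g1_def cos_add cs D_def[symmetric] using Dpos[of x] cx by (simp add: field_simps power2_eq_square)
        show "sin (g1 x) = (a + b) * sin x * cos x / sqrt (D x)"
          unfolding g1_def sin_add cs D_def[symmetric] using Dpos[of x] cx by (simp add: field_simps power2_eq_square)
      qed
    qed
    then show ?thesis using p1 unfolding g1_0 g1_m by (subst (asm) has_integral_cong) auto
  qed
  have p2: "((\<lambda>x. (1 + a*b/D x) *\<^sub>R F (g2 x)) has_integral integral {g2 (pi/4)..g2 (pi/2)} F) {pi/4..pi/2}"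
  proof (rule has_integral_substitution[where c=0 and d=pi])
    show "g2 (pi/4) \<le> g2 (pi/2)" unfolding g2_m g2_e using arctan_ubound[of "b/a"] pi_gt_zero by linarith
    show "g2 ` {pi/4..pi/2} \<subseteq> {0..pi}"
    proof
      fix y assume "y \<in> g2 ` {pi/4..pi/2}"
      then obtain x where x: "x \<in> {pi/4..pi/2}" "y = g2 x" by auto
      have "0 \<le> cos x" by (intro cos_ge_zero) (use x pi_gt_zero in \<open>auto simp del: pi_gt_zero\<close>)
      moreover have "0 < sin x" by (intro sin_gt_zero) (use x pi_gt_zero in \<open>auto simp del: pi_gt_zero\<close>)
      ultimately have A1: "0 \<le> arctan (a/b * (cos x / sin x))" using a b by simp
      have A2: "arctan (a/b * (cos x / sin x)) < pi/2" by (rule arctan_ubound)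
      have xb: "pi/4 \<le> x" "x \<le> pi/2" using x by auto
      show "y \<in> {0..pi}" using x(2) xb A1 A2 pi_gt_zero unfolding g2_def atLeastAtMost_iff by linarith
    qed
    show "continuous_on {0..pi} F" by (rule Fcont)
    fix x assume x: "x \<in> {pi/4..pi/2}"
    have "sin x > 0" by (intro sin_gt_zero) (use x pi_gt_zero in \<open>auto simp del: pi_gt_zero\<close>)
    then show "(g2 has_real_derivative (1 + a*b/D x)) (at x within {pi/4..pi/2})"
      unfolding g2_def[abs_def] D_def using g2_deriv[OF a b] has_field_derivative_at_within by blast
  qed (use pi_gt_zero in \<open>simp del: pi_gt_zero\<close>)
  have p2': "((\<lambda>x. 2/sqrt (D x)) has_integral integral {pi/4 + arctan (b/a)..pi} F) {pi/4..pi/2}"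
  proof -
    have "(1 + a*b/D x) *\<^sub>R F (g2 x) = 2/sqrt (D x)" if x: "x \<in> {pi/4..pi/2}" for x
    proof -
      have sx: "sin x > 0" by (intro sin_gt_zero) (use x pi_gt_zero in \<open>auto simp del: pi_gt_zero\<close>)
      note cs = arctan_cot_cs[OF a b sx]
      show ?thesis unfolding F_def real_scaleR_def
      proof (rule landen_point[OF a b D_def Dpos])
        show "cos x > 0 \<or> sin x > 0" using sx by simp
        show "cos (g2 x) = (a * (cos x)\<^sup>2 - b * (sin x)\<^sup>2) / sqrt (D x)"
          unfolding g2_def cos_diff cos_add sin_add cs D_def[symmetric] using Dpos[of x] sx
          by (simp add: field_simps power2_eq_square)
        show "sin (g2 x) = (a + b) * sin x * cos x / sqrt (D x)"
          unfolding g2_def sin_diff cos_add sin_add cs D_def[symmetric] using Dpos[of x] sx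
          by (simp add: field_simps power2_eq_square)
      qed
    qed
    then show ?thesis using p2 unfolding g2_m g2_e by (subst (asm) has_integral_cong) auto
  qed
  have Fint: "F integrable_on {u..v}" for u v by (rule integrable_continuous_interval[OF Fcont])
  have m_le: "pi/4 + arctan (b/a) \<le> pi" using arctan_ubound[of "b/a"] pi_gt_zero by linarith
  have whole: "((\<lambda>x. 2/sqrt (D x)) has_integral integral {0..pi} F) {0..pi/2}"
  proof -
    have "((\<lambda>x. 2/sqrt (D x)) has_integral (integral {0..pi/4 + arctan (b/a)} F + integral {pi/4 + arctan (b/a)..pi} F)) {0..pi/2}"
      by (rule has_integral_combine[OF _ _ p1' p2']) (use pi_gt_zero in \<open>simp_all del: pi_gt_zero\<close>)
    moreover have "integral {0..pi/4 + arctan (b/a)} F + integral {pi/4 + arctan (b/a)..pi} F = integral {0..pi} F"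
      by (rule Henstock_Kurzweil_Integration.integral_combine[OF _ m_le Fint]) (use at_pos pi_gt_zero in \<open>simp del: pi_gt_zero\<close>)
    ultimately show ?thesis by simp
  qed
  have Fsym: "F (pi - x) = F x" for x unfolding F_def by simp
  have half: "integral {pi/2..pi} F = integral {0..pi/2} F"
  proof -
    have "integral {pi/2..pi} F = integral {-pi..-(pi/2)} (\<lambda>x. F (-x))"
      using Henstock_Kurzweil_Integration.integral_reflect_real[of pi "pi/2" F] by simp
    also have "\<dots> = integral {0 + -pi..pi/2 + -pi} (\<lambda>x. F (-x))" by simp
    also have "\<dots> = integral {0..pi/2} ((\<lambda>x. F (-x)) \<circ> (\<lambda>x. x + -pi))"
      by (rule integral_shift[symmetric]) (intro continuous_intros continuous_on_compose2[OF Fcont[of UNIV]]; auto)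
    also have "\<dots> = integral {0..pi/2} F" by (simp add: o_def Fsym)
    finally show ?thesis .
  qed
  have "integral {0..pi} F = 2 * integral {0..pi/2} F"
    using Henstock_Kurzweil_Integration.integral_combine[OF _ _ Fint, of 0 "pi/2" pi] half pi_gt_zero by (simp del: pi_gt_zero)
  moreover have "integral {0..pi/2} (\<lambda>x. 2/sqrt (D x)) = 2 * integral {0..pi/2} (\<lambda>x. 1/sqrt (D x))"
    by (simp add: integral_mult_right[symmetric] del: integral_mult_right)
  ultimately have "integral {0..pi/2} (\<lambda>x. 1/sqrt (D x)) = integral {0..pi/2} F"
    using integral_unique[OF whole] by simp
  then show ?thesis unfolding D_def F_def .
qed
lemma key1:
  fixes p x v :: real
  assumes p: "p > 0" and x: "x > 0" and v: "v > 0"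
  shows "((p+v)\<^sup>2 - (p+x)*(2*(p+x) - p + v)) * ((p+x+v)*p)
       + ((p+x)*(p+v)) * (p*(2*p - (p+x) + v) - (p+x+v)\<^sup>2) < 0"
proof -
  have "((p+v)\<^sup>2 - (p+x)*(2*(p+x) - p + v)) * ((p+x+v)*p)
       + ((p+x)*(p+v)) * (p*(2*p - (p+x) + v) - (p+x+v)\<^sup>2)
      = - (x * v^3 + 2*x^2 * v^2 + x^3 * v + 4*p*x * v^2 + 9*p*x^2 * v + 3*p*x^3 + 9*p^2*x * v + 9*p^2*x^2 + 6*p^3*x)"
    by (simp add: algebra_simps power2_eq_square power3_eq_cube)
  moreover have "0 < x * v^3 + 2*x^2 * v^2 + x^3 * v + 4*p*x * v^2 + 9*p*x^2 * v + 3*p*x^3 + 9*p^2*x * v + 9*p^2*x^2 + 6*p^3*x"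
    using p x v by (intro add_pos_pos mult_pos_pos zero_less_power) auto
  ultimately show ?thesis by linarith
qed

lemma aux_lin: fixes X Y K R :: real
  shows "4 * (Y - X) = K + R \<Longrightarrow> 0 \<le> K \<Longrightarrow> 0 < R \<Longrightarrow> X < Y" by (smt (verit))

lemma key2:
  fixes p x v :: real
  assumes p: "p > 0" and x: "x > 0" and v: "v > 0"
    and N2: "(p+v)\<^sup>2 - (p+x)*(2*(p+x) - p + v) > 0"
  shows "((p+v)\<^sup>2 - (p+x)*(2*(p+x) - p + v))\<^sup>2 * ((p+x+v)*p)
       < (p*(2*p - (p+x) + v) - (p+x+v)\<^sup>2)\<^sup>2 * ((p+x)*(p+v))"
proof -
  define N where "N = (p+v)\<^sup>2 - (p+x)*(2*(p+x) - p + v)"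
  define R where "R = 4*x * v^5 + 16*x^2 * v^4 + 24*x^3 * v^3 + 16*x^4 * v^2 + 4*x^5 * v + 32*p*x * v^4 + 100*p*x^2 * v^3 + 86*p*x^3 * v^2 + 18*p*x^4 * v + 100*p^2*x * v^3 + 171*p^2*x^2 * v^2 + 63*p^2*x^3 * v + 120*p^3*x * v^2 + 87*p^3*x^2 * v + 3*p^3*x^3 + 48*p^4*x * v"
  have eq: "4 * ((p*(2*p - (p+x) + v) - (p+x+v)\<^sup>2)\<^sup>2 * ((p+x)*(p+v))
       - ((p+v)\<^sup>2 - (p+x)*(2*(p+x) - p + v))\<^sup>2 * ((p+x+v)*p))
      = N * (p*x^2*(6*x+9*p)) + R"
    unfolding N_def R_def by (simp add: algebra_simps power2_eq_square power3_eq_cube power4_eq_xxxx numeral_eq_Suc)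
  have "R > 0" unfolding R_def using p x v by (intro add_pos_pos mult_pos_pos zero_less_power) auto
  moreover have "N * (p*x^2*(6*x+9*p)) \<ge> 0" unfolding N_def using N2 p x
    by (intro mult_nonneg_nonneg) auto
  ultimately show ?thesis using aux_lin[OF eq] by blast
qed

lemma omega_pos:
  fixes \<omega> c :: real
  assumes H: "\<omega> > c\<^sup>2 / 4 \<or> (\<omega> = c\<^sup>2 / 4 \<and> c > 0)"
  shows "\<omega> > 0"
proof -
  have "c\<^sup>2 / 4 \<ge> 0" by simp
  moreover have "c > 0 \<Longrightarrow> c\<^sup>2 / 4 > 0" by simp
  ultimately show ?thesis using H by linarith
qed

lemma interval_facts:
  fixes \<omega> c e :: real
  assumes H: "\<omega> > c\<^sup>2 / 4 \<or> (\<omega> = c\<^sup>2 / 4 \<and> c > 0)"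
    and e0: "alpha0 \<omega> c < e" and e1: "e < alpha1 \<omega> c"
  shows "Apoly \<omega> c e > 0" "eta1 \<omega> c e < 0" "eta2 \<omega> c e > 0" "eta2 \<omega> c e < e"
proof -
  have w: "\<omega> > 0" using omega_pos[OF H] .
  define W where "W = sqrt \<omega>"
  have W: "W > 0" "W\<^sup>2 = \<omega>" unfolding W_def using w by auto
  define r where "r = sqrt (48 * \<omega> + 4 * c\<^sup>2)"
  have r: "r > 0" "r\<^sup>2 = 48 * \<omega> + 4 * c\<^sup>2" unfolding r_def using w by (auto intro: add_pos_nonneg)
  have r2c: "r \<ge> 2 * c"
  proof -
    have "sqrt ((2*c)\<^sup>2) \<le> r" unfolding r_def using w by (intro real_sqrt_le_mono) (simp add: power2_eq_square)
    then show ?thesis by (metis abs_ge_self order_trans real_sqrt_abs)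
  qed
  have ea0: "3 * e > 4 * c + r" using e0 unfolding alpha0_def r_def by simp
  have ea1: "e < 4 * W + 2 * c" using e1 unfolding alpha1_def W_def by simp
  have d1: "0 < e - 2 * c" using ea0 r2c by linarith
  have d2: "e - 2 * c < 4 * W" using ea1 by linarith
  have sq: "(e - 2*c)\<^sup>2 < 16 * \<omega>"
  proof -
    have "(e - 2*c)\<^sup>2 < (4*W)\<^sup>2" using d1 d2 by (intro power_strict_mono) auto
    then show ?thesis using W by (simp add: power_mult_distrib)
  qed
  have Agt: "Apoly \<omega> c e - (4*c - e)\<^sup>2 = 64 * \<omega> - 4 * (e - 2*c)\<^sup>2"
    unfolding Apoly_def by (simp add: power2_eq_square algebra_simps)
  then have A1: "Apoly \<omega> c e > (4*c - e)\<^sup>2" using sq by linarith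
  then show Ap: "Apoly \<omega> c e > 0" by (smt (verit) zero_le_power2)
  define s where "s = sqrt (Apoly \<omega> c e)"
  have s: "s > 0" "s\<^sup>2 = Apoly \<omega> c e" unfolding s_def using Ap by auto
  have s1: "s > \<bar>4*c - e\<bar>"
  proof -
    have "sqrt ((4*c - e)\<^sup>2) < s" unfolding s_def using A1 by (intro real_sqrt_less_mono)
    then show ?thesis by simp
  qed
  have s1': "4*c - e < s" "e - 4*c < s" using s1 by (auto simp: abs_less_iff)
  show "eta1 \<omega> c e < 0" unfolding eta1_def s_def[symmetric] using s1' by (simp add: field_simps)
  show b0: "eta2 \<omega> c e > 0" unfolding eta2_def s_def[symmetric] using s1' by (simp add: field_simps)
  have t0: "3*e - 4*c > r" using ea0 by linarith
  have "(3*e - 4*c)\<^sup>2 > r\<^sup>2" using t0 r by (intro power_strict_mono) auto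
  then have "(3*e - 4*c)\<^sup>2 > s\<^sup>2" unfolding s(2) r(2) unfolding Apoly_def
    by (simp add: power2_eq_square algebra_simps)
  then have "s < 3*e - 4*c" using s t0 r by (smt (verit) power_mono)
  then show "eta2 \<omega> c e < e" unfolding eta2_def s_def[symmetric] by (simp add: field_simps)
qed

lemma S_deriv:
  fixes \<omega> c e :: real
  assumes Ap: "Apoly \<omega> c e > 0"
  shows "((\<lambda>e. sqrt (Apoly \<omega> c e)) has_real_derivative (4*c - 3*e) / sqrt (Apoly \<omega> c e)) (at e)"
proof -
  have dA: "((\<lambda>e. Apoly \<omega> c e) has_real_derivative (8*c - 6*e)) (at e)"
    unfolding Apoly_def by (auto intro!: derivative_eq_intros)
  have d: "((\<lambda>e. sqrt (Apoly \<omega> c e)) has_real_derivative (inverse (sqrt (Apoly \<omega> c e)) / 2) * (8*c - 6*e)) (at e)"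
    by (rule DERIV_chain2[OF DERIV_real_sqrt[OF Ap] dA])
  have eq: "(inverse (sqrt (Apoly \<omega> c e)) / 2) * (8*c - 6*e) = (4*c - 3*e) / sqrt (Apoly \<omega> c e)"
    using Ap by (simp add: field_simps)
  show ?thesis using d unfolding eq .
qed

lemma prod_deriv:
  fixes S :: "real \<Rightarrow> real"
  assumes "(S has_real_derivative S') (at e)"
  shows "((\<lambda>e. ((3*e - 4*c + S e)/2) * ((4*c - e + S e)/2)) has_real_derivative
     ((3 + S')/2) * ((4*c - e + S e)/2) + ((-1 + S')/2) * ((3*e - 4*c + S e)/2)) (at e)"
  using assms by (auto intro!: derivative_eq_intros)

lemma P_derivs:
  fixes \<omega> c e :: real
  assumes Ap: "Apoly \<omega> c e > 0"
  defines "s \<equiv> sqrt (Apoly \<omega> c e)" and "p \<equiv> eta2 \<omega> c e" and "v \<equiv> - eta1 \<omega> c e" and "x \<equiv> e - eta2 \<omega> c e"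
  shows "((\<lambda>e. e * sqrt (Apoly \<omega> c e)) has_real_derivative ((p+v)\<^sup>2 - (p+x)*(2*(p+x) - p + v))/s) (at e)"
    and "((\<lambda>e. (e - eta1 \<omega> c e) * eta2 \<omega> c e) has_real_derivative (p*(2*p - (p+x) + v) - (p+x+v)\<^sup>2)/s) (at e)"
proof -
  note dS = S_deriv[OF Ap]
  have sp: "s > 0" unfolding s_def using Ap by simp
  have hs: "s = p + v" unfolding s_def p_def v_def eta1_def eta2_def by (simp add: field_simps)
  have he: "e = p + x" unfolding x_def p_def by simp
  have hc: "c = (2*p + x - v)/4" unfolding x_def p_def v_def eta1_def eta2_def by (simp add: field_simps)
  have "((\<lambda>e. e * sqrt (Apoly \<omega> c e)) has_real_derivative (1 * s + ((4*c - 3*e)/s) * e)) (at e)"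
    unfolding s_def by (rule DERIV_mult[OF DERIV_ident dS])
  moreover have "1 * s + ((4*c - 3*e)/s) * e = ((p+v)\<^sup>2 - (p+x)*(2*(p+x) - p + v))/s"
    using sp unfolding hc he by (simp add: field_simps power2_eq_square, simp add: hs algebra_simps)
  ultimately show "((\<lambda>e. e * sqrt (Apoly \<omega> c e)) has_real_derivative ((p+v)\<^sup>2 - (p+x)*(2*(p+x) - p + v))/s) (at e)"
    by simp
  have feq: "(\<lambda>e. (e - eta1 \<omega> c e) * eta2 \<omega> c e) = (\<lambda>e. ((3*e - 4*c + sqrt (Apoly \<omega> c e))/2) * ((4*c - e + sqrt (Apoly \<omega> c e))/2))"
    unfolding eta1_def eta2_def by (auto simp: field_simps)
  have "((\<lambda>e. ((3*e - 4*c + sqrt (Apoly \<omega> c e))/2) * ((4*c - e + sqrt (Apoly \<omega> c e))/2)) has_real_derivative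
      ((3 + (4*c - 3*e)/s)/2) * ((4*c - e + s)/2) + ((-1 + (4*c - 3*e)/s)/2) * ((3*e - 4*c + s)/2)) (at e)"
    unfolding s_def by (rule prod_deriv[OF dS])
  moreover have "((3 + (4*c - 3*e)/s)/2) * ((4*c - e + s)/2) + ((-1 + (4*c - 3*e)/s)/2) * ((3*e - 4*c + s)/2)
     = (p*(2*p - (p+x) + v) - (p+x+v)\<^sup>2)/s"
    using sp unfolding hc he by (simp add: field_simps power2_eq_square, simp add: hs algebra_simps)
  ultimately show "((\<lambda>e. (e - eta1 \<omega> c e) * eta2 \<omega> c e) has_real_derivative (p*(2*p - (p+x) + v) - (p+x+v)\<^sup>2)/s) (at e)"
    unfolding feq by simp
qed

definition P2f :: "real \<Rightarrow> real \<Rightarrow> real \<Rightarrow> real" where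
  "P2f \<omega> c e = e * sqrt (Apoly \<omega> c e)"
definition P3f :: "real \<Rightarrow> real \<Rightarrow> real \<Rightarrow> real" where
  "P3f \<omega> c e = (e - eta1 \<omega> c e) * eta2 \<omega> c e"

lemma pxv_facts:
  fixes \<omega> c e :: real
  assumes H: "\<omega> > c\<^sup>2 / 4 \<or> (\<omega> = c\<^sup>2 / 4 \<and> c > 0)"
    and e0: "alpha0 \<omega> c < e" and e1: "e < alpha1 \<omega> c"
  defines "p \<equiv> eta2 \<omega> c e" and "v \<equiv> - eta1 \<omega> c e" and "x \<equiv> e - eta2 \<omega> c e"
  shows "p > 0" "v > 0" "x > 0" "sqrt (Apoly \<omega> c e) = p + v" "e = p + x"
    "P2f \<omega> c e = (p+x)*(p+v)" "P3f \<omega> c e = (p+x+v)*p"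
proof -
  note f = interval_facts[OF H e0 e1]
  show "p > 0" "v > 0" "x > 0" using f unfolding p_def v_def x_def by auto
  show hs: "sqrt (Apoly \<omega> c e) = p + v" unfolding p_def v_def eta1_def eta2_def by (simp add: field_simps)
  show he: "e = p + x" unfolding x_def p_def by simp
  show "P2f \<omega> c e = (p+x)*(p+v)" unfolding P2f_def hs using he by simp
  show "P3f \<omega> c e = (p+x+v)*p" unfolding P3f_def p_def v_def x_def by simp
qed

lemma J_convex:
  assumes "alpha0 \<omega> c < e1" "e2 < alpha1 \<omega> c" "e1 \<le> y" "y \<le> e2"
  shows "alpha0 \<omega> c < y" "y < alpha1 \<omega> c"
  using assms by auto

lemma prod_decr:
  fixes \<omega> c e1 e2 :: real
  assumes H: "\<omega> > c\<^sup>2 / 4 \<or> (\<omega> = c\<^sup>2 / 4 \<and> c > 0)"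
    and e1: "alpha0 \<omega> c < e1" and e2: "e2 < alpha1 \<omega> c" and lt: "e1 < e2"
  shows "P2f \<omega> c e2 * P3f \<omega> c e2 < P2f \<omega> c e1 * P3f \<omega> c e1"
proof -
  have "P2f \<omega> c e1 * P3f \<omega> c e1 > P2f \<omega> c e2 * P3f \<omega> c e2"
  proof (rule DERIV_neg_imp_decreasing[OF lt])
    fix y assume y: "e1 \<le> y" "y \<le> e2"
    note yJ = J_convex[OF e1 e2 y]
    note f = interval_facts[OF H yJ]
    define p where "p = eta2 \<omega> c y"
    define v where "v = - eta1 \<omega> c y"
    define x where "x = y - eta2 \<omega> c y"
    define s where "s = sqrt (Apoly \<omega> c y)"
    note pf = pxv_facts[OF H yJ, folded p_def v_def x_def]
    note d = P_derivs[OF f(1), folded p_def v_def x_def s_def]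
    have sp: "s > 0" unfolding s_def using f(1) by simp
    have dd: "((\<lambda>e. P2f \<omega> c e * P3f \<omega> c e) has_real_derivative
       ((p+v)\<^sup>2 - (p+x)*(2*(p+x) - p + v))/s * P3f \<omega> c y + (p*(2*p - (p+x) + v) - (p+x+v)\<^sup>2)/s * P2f \<omega> c y) (at y)"
      unfolding P2f_def[abs_def] P3f_def[abs_def] by (rule DERIV_mult[OF d(1) d(2)])
    have "((p+v)\<^sup>2 - (p+x)*(2*(p+x) - p + v))/s * P3f \<omega> c y + (p*(2*p - (p+x) + v) - (p+x+v)\<^sup>2)/s * P2f \<omega> c y
       = (((p+v)\<^sup>2 - (p+x)*(2*(p+x) - p + v)) * ((p+x+v)*p) + ((p+x)*(p+v)) * (p*(2*p - (p+x) + v) - (p+x+v)\<^sup>2)) / s"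
      unfolding pf(6) pf(7) using sp by (simp add: field_simps)
    also have "\<dots> < 0" using key1[OF pf(1) pf(3) pf(2)] sp by (simp add: divide_neg_pos)
    finally show "\<exists>D. ((\<lambda>e. P2f \<omega> c e * P3f \<omega> c e) has_real_derivative D) (at y) \<and> D < 0"
      using dd by blast
  qed
  then show ?thesis by simp
qed

lemma sum_decr:
  fixes \<omega> c e1 e2 :: real
  assumes H: "\<omega> > c\<^sup>2 / 4 \<or> (\<omega> = c\<^sup>2 / 4 \<and> c > 0)"
    and e1: "alpha0 \<omega> c < e1" and e2: "e2 < alpha1 \<omega> c" and lt: "e1 < e2"
  shows "sqrt (P2f \<omega> c e2) + sqrt (P3f \<omega> c e2) < sqrt (P2f \<omega> c e1) + sqrt (P3f \<omega> c e1)"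
proof -
  have "sqrt (P2f \<omega> c e1) + sqrt (P3f \<omega> c e1) > sqrt (P2f \<omega> c e2) + sqrt (P3f \<omega> c e2)"
  proof (rule DERIV_neg_imp_decreasing[OF lt])
    fix y assume y: "e1 \<le> y" "y \<le> e2"
    note yJ = J_convex[OF e1 e2 y]
    note f = interval_facts[OF H yJ]
    define p where "p = eta2 \<omega> c y"
    define v where "v = - eta1 \<omega> c y"
    define x where "x = y - eta2 \<omega> c y"
    define s where "s = sqrt (Apoly \<omega> c y)"
    note pf = pxv_facts[OF H yJ, folded p_def v_def x_def]
    note d = P_derivs[OF f(1), folded p_def v_def x_def s_def]
    define N2 where "N2 = (p+v)\<^sup>2 - (p+x)*(2*(p+x) - p + v)"
    define N3 where "N3 = p*(2*p - (p+x) + v) - (p+x+v)\<^sup>2"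
    define Q2 where "Q2 = (p+x)*(p+v)"
    define Q3 where "Q3 = (p+x+v)*p"
    have sp: "s > 0" unfolding s_def using f(1) by simp
    have Q2p: "Q2 > 0" and Q3p: "Q3 > 0" unfolding Q2_def Q3_def using pf by auto
    have P2p: "P2f \<omega> c y > 0" and P3p: "P3f \<omega> c y > 0" using pf Q2p Q3p unfolding Q2_def Q3_def by auto
    have dd: "((\<lambda>e. sqrt (P2f \<omega> c e) + sqrt (P3f \<omega> c e)) has_real_derivative
       inverse (sqrt (P2f \<omega> c y)) / 2 * (N2/s) + inverse (sqrt (P3f \<omega> c y)) / 2 * (N3/s)) (at y)"
      unfolding N2_def N3_def
      by (intro DERIV_add DERIV_chain2[OF DERIV_real_sqrt] P2p P3p,
          unfold P2f_def[abs_def] P3f_def[abs_def], rule d(1), rule d(2))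
    have N3n: "N3 < 0"
    proof -
      have "p*(2*p - (p+x) + v) < p * (p+x+v)" using pf by (intro mult_strict_left_mono) auto
      also have "\<dots> < (p+x+v) * (p+x+v)" using pf by (intro mult_strict_right_mono) auto
      finally show ?thesis unfolding N3_def by (simp add: power2_eq_square)
    qed
    have key: "N2 / sqrt Q2 + N3 / sqrt Q3 < 0"
    proof (cases "N2 \<le> 0")
      case True
      then have "N2 / sqrt Q2 \<le> 0" using Q2p by (simp add: divide_nonpos_pos)
      moreover have "N3 / sqrt Q3 < 0" using N3n Q3p by (simp add: divide_neg_pos)
      ultimately show ?thesis by linarith
    next
      case False
      then have N2p: "N2 > 0" by simp
      have "N2\<^sup>2 * Q3 < N3\<^sup>2 * Q2"
        using key2[OF pf(1) pf(3) pf(2)] N2p unfolding N2_def N3_def Q2_def Q3_def by blast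
      then have "sqrt (N2\<^sup>2 * Q3) < sqrt (N3\<^sup>2 * Q2)" by (rule real_sqrt_less_mono)
      then have "N2 * sqrt Q3 < (- N3) * sqrt Q2"
        using N2p N3n by (simp add: real_sqrt_mult)
      then have "N2 * sqrt Q3 / (sqrt Q2 * sqrt Q3) < (- N3) * sqrt Q2 / (sqrt Q2 * sqrt Q3)"
        using Q2p Q3p by (intro divide_strict_right_mono) auto
      then show ?thesis using Q2p Q3p by (simp add: field_simps)
    qed
    have "inverse (sqrt (P2f \<omega> c y)) / 2 * (N2/s) + inverse (sqrt (P3f \<omega> c y)) / 2 * (N3/s)
        = (N2 / sqrt Q2 + N3 / sqrt Q3) / (2 * s)"
      unfolding pf(6) pf(7) Q2_def[symmetric] Q3_def[symmetric] using sp by (simp add: field_simps)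
    also have "\<dots> < 0" using key sp by (simp add: divide_neg_pos)
    finally show "\<exists>D. ((\<lambda>e. sqrt (P2f \<omega> c e) + sqrt (P3f \<omega> c e)) has_real_derivative D) (at y) \<and> D < 0"
      using dd by blast
  qed
  then show ?thesis by simp
qed

lemma integral_cmult_real: "integral S (\<lambda>x. k * f x) = k * integral S (f :: real \<Rightarrow> real)"
  using integral_cmul[of S k f] by simp

lemma T_repr:
  fixes \<omega> c e :: real
  assumes H: "\<omega> > c\<^sup>2 / 4 \<or> (\<omega> = c\<^sup>2 / 4 \<and> c > 0)"
    and e0: "alpha0 \<omega> c < e" and e1: "e < alpha1 \<omega> c"
  shows "T_psi \<omega> c e = 8 * integral {0..pi/2} (\<lambda>t. 1 / sqrt (((sqrt (P2f \<omega> c e) + sqrt (P3f \<omega> c e))/2)\<^sup>2 * (cos t)\<^sup>2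
            + sqrt (P2f \<omega> c e) * sqrt (P3f \<omega> c e) * (sin t)\<^sup>2))"
proof -
  define p where "p = eta2 \<omega> c e"
  define v where "v = - eta1 \<omega> c e"
  define x where "x = e - eta2 \<omega> c e"
  note pf = pxv_facts[OF H e0 e1, folded p_def v_def x_def]
  define a where "a = sqrt (P2f \<omega> c e)"
  define b where "b = sqrt (P3f \<omega> c e)"
  have P2p: "P2f \<omega> c e > 0" and P3p: "P3f \<omega> c e > 0" unfolding pf(6) pf(7) using pf by auto
  have a: "a > 0" "a\<^sup>2 = (p+x)*(p+v)" unfolding a_def using P2p pf(6) by auto
  have b: "b > 0" "b\<^sup>2 = (p+x+v)*p" unfolding b_def using P3p pf(7) by auto
  have k: "ksq \<omega> c e = v * x / ((p+x)*(p+v))"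
    unfolding ksq_def using pf(5) unfolding p_def v_def x_def by (simp add: algebra_simps)
  have k0: "ksq \<omega> c e \<ge> 0" unfolding k using pf by simp
  have ea: "sqrt (e * sqrt (Apoly \<omega> c e)) = a" unfolding a_def P2f_def ..
  have T1: "T_psi \<omega> c e = 8 / a * integral {0..pi/2} (\<lambda>t. 1 / sqrt (1 - ksq \<omega> c e * (sin t)\<^sup>2))"
    unfolding T_psi_def ellipK_def ea using k0 by simp
  have pt: "8 / a * (1 / sqrt (1 - ksq \<omega> c e * (sin t)\<^sup>2)) = 8 * (1 / sqrt (a\<^sup>2 * (cos t)\<^sup>2 + b\<^sup>2 * (sin t)\<^sup>2))" for t
  proof -
    have cs: "(cos t)\<^sup>2 = 1 - (sin t)\<^sup>2" by (simp add: cos_squared_eq)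
    have Z: "a\<^sup>2 * (cos t)\<^sup>2 + b\<^sup>2 * (sin t)\<^sup>2 = a\<^sup>2 * (1 - ksq \<omega> c e * (sin t)\<^sup>2)"
    proof -
      have den: "(p+x)*(p+v) \<noteq> 0" using pf(1-3) by simp
      show ?thesis unfolding a(2) b(2) k cs using den by (simp add: field_simps)
    qed
    have "sqrt (a\<^sup>2 * (1 - ksq \<omega> c e * (sin t)\<^sup>2)) = a * sqrt (1 - ksq \<omega> c e * (sin t)\<^sup>2)"
      using a(1) by (simp add: real_sqrt_mult)
    then show ?thesis unfolding Z using a(1) by (simp add: field_simps)
  qed
  have "T_psi \<omega> c e = 8 * integral {0..pi/2} (\<lambda>t. 1 / sqrt (a\<^sup>2 * (cos t)\<^sup>2 + b\<^sup>2 * (sin t)\<^sup>2))"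
    unfolding T1 integral_cmult_real[symmetric] pt by (rule refl)
  also have "\<dots> = 8 * integral {0..pi/2} (\<lambda>t. 1 / sqrt (((a + b)/2)\<^sup>2 * (cos t)\<^sup>2 + a * b * (sin t)\<^sup>2))"
    using landen[OF a(1) b(1)] by simp
  finally show ?thesis unfolding a_def b_def .
qed



lemma quad_pos:
  fixes P Q t :: real
  assumes "P > 0" "Q > 0"
  shows "P\<^sup>2 * (cos t)\<^sup>2 + Q * (sin t)\<^sup>2 > 0"
proof (cases "sin t = 0")
  case True
  then have "(cos t)\<^sup>2 = 1" using sin_cos_squared_add[of t] by simp
  then show ?thesis using assms True by simp
next
  case False
  then have "Q * (sin t)\<^sup>2 > 0" using assms by simp
  moreover have "P\<^sup>2 * (cos t)\<^sup>2 \<ge> 0" by simp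
  ultimately show ?thesis by linarith
qed

lemma G_cont:
  fixes P Q :: real
  assumes "P > 0" "Q > 0"
  shows "continuous_on S (\<lambda>t. 1 / sqrt (P\<^sup>2 * (cos t)\<^sup>2 + Q * (sin t)\<^sup>2))"
  by (intro continuous_intros) (use quad_pos[OF assms] in \<open>auto simp: less_imp_neq[symmetric]\<close>)

theorem proposition3p7:
  fixes \<omega> c :: real
  assumes "\<omega> > c\<^sup>2 / 4 \<or> (\<omega> = c\<^sup>2 / 4 \<and> c > 0)"
  shows "(\<forall>\<eta>3 \<in> {alpha0 \<omega> c <..< alpha1 \<omega> c}. T_psi \<omega> c \<eta>3 > 0)
       \<and> strict_mono_on {alpha0 \<omega> c <..< alpha1 \<omega> c} (T_psi \<omega> c)"
proof -
  note H = assms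
  define A where "A e = sqrt (P2f \<omega> c e)" for e
  define B where "B e = sqrt (P3f \<omega> c e)" for e
  define G where "G e t = 1 / sqrt (((A e + B e)/2)\<^sup>2 * (cos t)\<^sup>2 + A e * B e * (sin t)\<^sup>2)" for e t
  have ABpos: "A e > 0" "B e > 0" if "e \<in> {alpha0 \<omega> c <..< alpha1 \<omega> c}" for e
  proof -
    note pf = pxv_facts[OF H, of e] 
    have "P2f \<omega> c e > 0" "P3f \<omega> c e > 0" using that pf by auto
    then show "A e > 0" "B e > 0" unfolding A_def B_def by auto
  qed
  have Trep: "T_psi \<omega> c e = 8 * integral {0..pi/2} (G e)" if "e \<in> {alpha0 \<omega> c <..< alpha1 \<omega> c}" for e
    unfolding G_def A_def B_def using T_repr[OF H] that by auto
  have Gcont: "continuous_on {0..pi/2} (G e)" if "e \<in> {alpha0 \<omega> c <..< alpha1 \<omega> c}" for e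
    unfolding G_def[abs_def] using ABpos[OF that] by (intro G_cont) auto
  have Gpos: "G e t > 0" if "e \<in> {alpha0 \<omega> c <..< alpha1 \<omega> c}" for e t
    unfolding G_def using quad_pos[of "(A e + B e)/2" "A e * B e" t] ABpos[OF that] by simp
  have ne: "{0<..<pi/2} \<noteq> {}" using pi_gt_zero by (simp del: pi_gt_zero)
  show ?thesis
  proof (intro conjI ballI strict_mono_onI)
    fix e assume e: "e \<in> {alpha0 \<omega> c <..< alpha1 \<omega> c}"
    have "integral {0..pi/2} (\<lambda>t. 0) < integral {0..pi/2} (G e)"
      by (rule integral_less_real[OF continuous_on_const Gcont[OF e] ne]) (use Gpos[OF e] in auto)
    then show "T_psi \<omega> c e > 0" unfolding Trep[OF e] by simp
  next
    fix e1 e2 assume e1: "e1 \<in> {alpha0 \<omega> c <..< alpha1 \<omega> c}" and e2: "e2 \<in> {alpha0 \<omega> c <..< alpha1 \<omega> c}"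
      and lt: "e1 < e2"
    have lo: "alpha0 \<omega> c < e1" and hi: "e2 < alpha1 \<omega> c" using e1 e2 by auto
    have sdec: "A e2 + B e2 < A e1 + B e1" unfolding A_def B_def by (rule sum_decr[OF H lo hi lt])
    have pdec: "A e2 * B e2 < A e1 * B e1"
      unfolding A_def B_def real_sqrt_mult[symmetric] by (rule real_sqrt_less_mono, rule prod_decr[OF H lo hi lt])
    have sq: "((A e2 + B e2)/2)\<^sup>2 < ((A e1 + B e1)/2)\<^sup>2"
      using sdec ABpos[OF e2] by (intro power_strict_mono) auto
    have "integral {0..pi/2} (G e1) < integral {0..pi/2} (G e2)"
    proof (rule integral_less_real[OF Gcont[OF e1] Gcont[OF e2] ne])
      fix t assume t: "t \<in> {0<..<pi/2}"
      have ct: "cos t > 0" by (rule cos_gt_zero) (use t in auto)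
      have st: "sin t > 0" by (rule sin_gt_zero) (use t in auto)
      define D1 where "D1 = ((A e1 + B e1)/2)\<^sup>2 * (cos t)\<^sup>2 + A e1 * B e1 * (sin t)\<^sup>2"
      define D2 where "D2 = ((A e2 + B e2)/2)\<^sup>2 * (cos t)\<^sup>2 + A e2 * B e2 * (sin t)\<^sup>2"
      have "((A e2 + B e2)/2)\<^sup>2 * (cos t)\<^sup>2 < ((A e1 + B e1)/2)\<^sup>2 * (cos t)\<^sup>2"
        using sq ct by (intro mult_strict_right_mono) auto
      moreover have "A e2 * B e2 * (sin t)\<^sup>2 < A e1 * B e1 * (sin t)\<^sup>2"
        using pdec st by (intro mult_strict_right_mono) auto
      ultimately have D: "D2 < D1" unfolding D1_def D2_def by linarith
      have D2p: "D2 > 0" unfolding D2_def using quad_pos[of "(A e2 + B e2)/2" "A e2 * B e2" t] ABpos[OF e2] by simp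
      have "sqrt D2 < sqrt D1" using D by (rule real_sqrt_less_mono)
      then have "1 / sqrt D1 < 1 / sqrt D2" using D2p by (intro divide_strict_left_mono) auto
      then show "G e1 t < G e2 t" unfolding G_def D1_def D2_def .
    qed
    then show "T_psi \<omega> c e1 < T_psi \<omega> c e2" unfolding Trep[OF e1] Trep[OF e2] by simp
  qed
qed

end
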